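(* Let $n\ge1$ and $g\in\mathcal G_n$. Then there are exactly $2^n$ uphills from $1$ to $g$, exactly $2^n$ downhills from $g$ to $1$, and exactly $2^{2n}$ mountains with peak $g$.
   Context: Let $X$ be a nonempty set and $X'=\{x':x\in X\}$ a disjoint copy of $X$; let $1$ be a new symbol and $A=X\cup X'\cup\{1\}$ (the anchors), with the involution $1'=1$, $(x)'=x'$, $(x')'=x$ for $x\in X$. For a 5-tuple $g$ write $g=(g^l,g^{la},g^c,g^{ra},g^r)$ (left entry, left anchor, middle entry, right anchor, right entry); the notation iterates, e.g. for $s\in\{l,r\}$, $g^{ls}$ is the $s$-entry of $g^l$ and $g^{lsa}$ is the $s$-anchor of $g^l$. Define $\mathcal G_0=\{1\}$; $\mathcal G_{1,e}=\{g_{xx'}:x\in X\}$ where $g_{xx'}=(1,1,xx',x',1)$ (the middle entry is a formal symbol), and $\mathcal G_{1,d}=\emptyset$. For $i\ge 2$: $\mathcal G_{i,e}=\{(g,(g^{la})',g^l,(g^{ra})',g),\ (g,(g^{ra})',g^l,(g^{la})',g) : g\in\mathcal G_{i-1,e}\}$, and $\mathcal G_{i,d}$ is the set of all $g\in\mathcal G_{i-1}\times A\times\mathcal G_{i-2}\times A\times\mathcal G_{i-1}$ such that $g^l\neq g^r$, $(g^c,g^{la})=(g^{ls},(g^{lsa})')$ for some $s\in\{l,r\}$, and $(g^c,g^{ra})=(g^{rt},(g^{rta})')$ for some $t\in\{l,r\}$; here $\mathcal G_i=\mathcal G_{i,d}\cup\mathcal G_{i,e}$ for $i\ge1$. Put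 $\mathcal G^5=\bigcup_{i\ge1}\mathcal G_i$, $\mathcal G=\mathcal G^5\cup A$, $\mathcal G'=\mathcal G^5\cup\{1\}$ (the symbol $1$ is used both as an anchor and as a letter of $\mathcal G'$). The height of $g\in\mathcal G_i$ is $i$; $1$ has height $0$. Words are elements of the free semigroup $\mathcal G^+$. A triplet $g_1ag_2$ with $g_1,g_2\in\mathcal G'$, $a\in A$ is left anchored if $g_2\in\mathcal G^5$ and $(g_1,a)=(g_2^s,g_2^{sa})$ for some $s\in\{l,r\}$, and right anchored if $g_1\in\mathcal G^5$ and $(g_2,a)=(g_1^s,(g_1^{sa})')$ for some $s\in\{l,r\}$; it is anchored if it is left or right anchored. An uphill from $h$ to $g$ is a word $g_0a_1g_1\cdots a_mg_m$ ($g_i\in\mathcal G'$, $a_i\in A$) with $g_0=h$, $g_m=g$, each $g_{i-1}a_ig_i$ anchored and height$(g_i)=$height$(g_{i-1})+1$ for all $i$; a downhill from $g$ to $h$ is defined the same way with height$(g_i)=$height$(g_{i-1})-1$. A mountain with peak $g$ (for $g\in\mathcal G^5$) is a word $u*v$ where $u$ is an uphill from $1$ to $g$ and $v$ is a downhill from $g$ to $1$, and $u*v$ denotes the concatenation of $u$ and $v$ with the common letter $g$ written only once. *)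

theory Defs
  imports Main
begin

text \<open>The set X is represented by the universe of a type variable 'x (types are nonempty).
Anchors A = X \<union> X' \<union> {1}.\<close>

datatype 'x anchor = AOne | APlain 'x | APrime 'x

fun ainv :: "'x anchor \<Rightarrow> 'x anchor" where
  "ainv AOne = AOne"
| "ainv (APlain x) = APrime x"
| "ainv (APrime x) = APlain x"

text \<open>Generators: the letter 1, the formal middle symbols x x', and 5-tuples
  (left entry, left anchor, middle entry, right anchor, right entry).\<close>

datatype 'x gen =
    GOne
  | GSym 'x
  | Tup (gl: "'x gen") (gla: "'x anchor") (gc: "'x gen") (gra: "'x anchor") (gr: "'x gen")

datatype side = SL | SR

fun entry :: "'x gen \<Rightarrow> side \<Rightarrow> 'x gen" where
  "entry g SL = gl g"
| "entry g SR = gr g"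

fun anch :: "'x gen \<Rightarrow> side \<Rightarrow> 'x anchor" where
  "anch g SL = gla g"
| "anch g SR = gra g"

definition gxx :: "'x \<Rightarrow> 'x gen" where
  "gxx x = Tup GOne AOne (GSym x) (APrime x) GOne"

text \<open>Extension part \<G>_{i,e}, for i \<ge> 1 (index 0 unused, set empty).\<close>
fun Ge :: "nat \<Rightarrow> 'x gen set" where
  "Ge 0 = {}"
| "Ge (Suc 0) = range gxx"
| "Ge (Suc (Suc i)) =
     {Tup g (ainv (gla g)) (gl g) (ainv (gra g)) g | g. g \<in> Ge (Suc i)}
   \<union> {Tup g (ainv (gra g)) (gl g) (ainv (gla g)) g | g. g \<in> Ge (Suc i)}"

definition Gd_step :: "'x gen set \<Rightarrow> 'x gen set \<Rightarrow> 'x gen set" where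
  "Gd_step P Q = {Tup l a c b r | l a c b r.
      l \<in> P \<and> a \<in> UNIV \<and> c \<in> Q \<and> b \<in> UNIV \<and> r \<in> P \<and> l \<noteq> r \<and>
      (\<exists>s. (c, a) = (entry l s, ainv (anch l s))) \<and>
      (\<exists>t. (c, b) = (entry r t, ainv (anch r t)))}"

text \<open>\<G>_i: \<G>_0 = {1}, \<G>_1 = \<G>_{1,e} (as \<G>_{1,d} is empty),
  \<G>_i = \<G>_{i,d} \<union> \<G>_{i,e} for i \<ge> 2.\<close>
fun Gs :: "nat \<Rightarrow> 'x gen set" where
  "Gs 0 = {GOne}"
| "Gs (Suc 0) = Ge (Suc 0)"
| "Gs (Suc (Suc i)) = Gd_step (Gs (Suc i)) (Gs i) \<union> Ge (Suc (Suc i))"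

definition G5 :: "'x gen set" where
  "G5 = (\<Union>i\<in>{1..}. Gs i)"

definition Gprime :: "'x gen set" where
  "Gprime = G5 \<union> {GOne}"

definition height :: "'x gen \<Rightarrow> nat" where
  "height g = (THE i. g \<in> Gs i)"

definition left_anchored :: "'x gen \<Rightarrow> 'x anchor \<Rightarrow> 'x gen \<Rightarrow> bool" where
  "left_anchored g1 a g2 \<longleftrightarrow> g2 \<in> G5 \<and> (\<exists>s. (g1, a) = (entry g2 s, anch g2 s))"

definition right_anchored :: "'x gen \<Rightarrow> 'x anchor \<Rightarrow> 'x gen \<Rightarrow> bool" where
  "right_anchored g1 a g2 \<longleftrightarrow> g1 \<in> G5 \<and> (\<exists>s. (g2, a) = (entry g1 s, ainv (anch g1 s)))"

definition anchored :: "'x gen \<Rightarrow> 'x anchor \<Rightarrow> 'x gen \<Rightarrow> bool" where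
  "anchored g1 a g2 \<longleftrightarrow> left_anchored g1 a g2 \<or> right_anchored g1 a g2"

text \<open>Letters of words (elements of \<G> = \<G>^5 \<union> A); words are nonempty lists of letters.\<close>
datatype 'x letter = LG "'x gen" | LA "'x anchor"

text \<open>The word g_0 a_1 g_1 ... a_m g_m.\<close>
definition mkword :: "'x gen list \<Rightarrow> 'x anchor list \<Rightarrow> 'x letter list" where
  "mkword gs as = LG (hd gs) # concat (map2 (\<lambda>a g. [LA a, LG g]) as (tl gs))"

definition hill :: "int \<Rightarrow> 'x gen \<Rightarrow> 'x gen \<Rightarrow> 'x letter list \<Rightarrow> bool" where
  "hill d h g w \<longleftrightarrow> (\<exists>gs as. length gs = Suc (length as) \<and> w = mkword gs as \<and>
      hd gs = h \<and> last gs = g \<and> set gs \<subseteq> Gprime \<and>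
      (\<forall>i<length as. anchored (gs ! i) (as ! i) (gs ! Suc i) \<and>
         int (height (gs ! Suc i)) = int (height (gs ! i)) + d))"

definition uphill :: "'x gen \<Rightarrow> 'x gen \<Rightarrow> 'x letter list \<Rightarrow> bool" where
  "uphill h g w \<longleftrightarrow> hill 1 h g w"

definition downhill :: "'x gen \<Rightarrow> 'x gen \<Rightarrow> 'x letter list \<Rightarrow> bool" where
  "downhill g h w \<longleftrightarrow> hill (-1) g h w"

text \<open>u * v: concatenation with the common letter g written once.\<close>
definition mountain :: "'x gen \<Rightarrow> 'x letter list \<Rightarrow> bool" where
  "mountain g w \<longleftrightarrow> g \<in> G5 \<and>
     (\<exists>u v. uphill GOne g u \<and> downhill g GOne v \<and> w = u @ tl v)"

end

theory Submission
  imports Defs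
begin

fun ldepth :: "'x gen \<Rightarrow> nat" where
  "ldepth (Tup l a c b r) = Suc (ldepth l)"
| "ldepth GOne = 0"
| "ldepth (GSym x) = 0"

lemma ex_side: "(\<exists>s. P s) = (P SL \<or> P SR)"
  by (metis side.exhaust)

lemma ainv_ainv[simp]: "ainv (ainv a) = a"
  by (cases a) auto

lemma ainv_inj[simp]: "(ainv a = ainv b) = (a = b)"
  by (metis ainv_ainv)

lemma Ge_sub: "Ge i \<subseteq> Gs i"
  by (induct i rule: Gs.induct) auto

lemma Gs_depth: "g \<in> Gs i \<Longrightarrow> ldepth g = i"
proof (induct i arbitrary: g rule: Gs.induct)
  case 1 then show ?case by simp
next
  case 2 then show ?case by (auto simp: gxx_def)
next
  case (3 i)
  have "g \<in> Gd_step (Gs (Suc i)) (Gs i) \<or> g \<in> Ge (Suc (Suc i))" using 3(3) by simp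
  then show ?case
  proof
    assume "g \<in> Gd_step (Gs (Suc i)) (Gs i)"
    then show ?thesis using 3(1) by (auto simp: Gd_step_def)
  next
    assume "g \<in> Ge (Suc (Suc i))"
    then show ?thesis using 3(1) by (auto dest: subsetD[OF Ge_sub])
  qed
qed

lemma Gs_entry: "g \<in> Gs (Suc i) \<Longrightarrow> entry g s \<in> Gs i"
proof (cases i)
  case 0
  assume "g \<in> Gs (Suc i)" then show ?thesis using 0 by (cases s) (auto simp: gxx_def)
next
  case (Suc j)
  assume "g \<in> Gs (Suc i)"
  then have "g \<in> Gd_step (Gs (Suc j)) (Gs j) \<or> g \<in> Ge (Suc (Suc j))" using Suc by simp
  then show ?thesis
  proof
    assume "g \<in> Gd_step (Gs (Suc j)) (Gs j)"
    then show ?thesis using Suc by (cases s) (auto simp: Gd_step_def)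
  next
    assume "g \<in> Ge (Suc (Suc j))"
    then show ?thesis using Suc by (cases s) (auto dest: subsetD[OF Ge_sub])
  qed
qed

lemma Ge_anch: "g \<in> Ge (Suc i) \<Longrightarrow> gla g \<noteq> gra g"
proof (induct i arbitrary: g)
  case 0 then show ?case by (auto simp: gxx_def)
next
  case (Suc i)
  then obtain h where h: "h \<in> Ge (Suc i)" and
    "g = Tup h (ainv (gla h)) (gl h) (ainv (gra h)) h \<or> g = Tup h (ainv (gra h)) (gl h) (ainv (gla h)) h"
    by auto
  then show ?case using Suc(1)[OF h] by auto
qed

lemma Gs_distinct: "g \<in> Gs (Suc i) \<Longrightarrow> (entry g SL, anch g SL) \<noteq> (entry g SR, anch g SR)"
proof (cases i)
  case 0
  assume "g \<in> Gs (Suc i)" then show ?thesis using 0 by (auto simp: gxx_def)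
next
  case (Suc j)
  assume "g \<in> Gs (Suc i)"
  then have "g \<in> Gd_step (Gs (Suc j)) (Gs j) \<or> g \<in> Ge (Suc (Suc j))" using Suc by simp
  then show ?thesis
  proof
    assume "g \<in> Gd_step (Gs (Suc j)) (Gs j)"
    then show ?thesis by (auto simp: Gd_step_def)
  next
    assume "g \<in> Ge (Suc (Suc j))"
    then show ?thesis using Ge_anch by fastforce
  qed
qed

lemma height_Gs: "g \<in> Gs i \<Longrightarrow> height g = i"
  unfolding height_def by (rule the_equality) (auto dest: Gs_depth)

lemma Gprime_iff: "g \<in> Gprime \<longleftrightarrow> (\<exists>i. g \<in> Gs i)"
proof
  assume "g \<in> Gprime" then show "\<exists>i. g \<in> Gs i"
    unfolding Gprime_def G5_def by (auto intro: exI[of _ 0])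
next
  assume "\<exists>i. g \<in> Gs i"
  then obtain i where i: "g \<in> Gs i" by blast
  show "g \<in> Gprime"
  proof (cases i)
    case 0 then show ?thesis using i by (simp add: Gprime_def)
  next
    case (Suc j) then show ?thesis using i unfolding Gprime_def G5_def by force
  qed
qed

lemma G5_iff: "g \<in> G5 \<longleftrightarrow> (\<exists>i\<ge>1. g \<in> Gs i)"
  unfolding G5_def by auto

lemma mkword_cons: "gs \<noteq> [] \<Longrightarrow> mkword (h # gs) (a # as) = LG h # LA a # mkword gs as"
  by (cases gs) (simp_all add: mkword_def)

lemma mkword_single: "mkword [h] [] = [LG h]"
  by (simp add: mkword_def)

lemma mkword_snoc: "length gs = Suc (length as) \<Longrightarrow>
   mkword (gs @ [g]) (as @ [a]) = mkword gs as @ [LA a, LG g]"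
  by (cases gs) (simp_all add: mkword_def)

lemma hill_cons:
  "hill d h g w \<longleftrightarrow> (w = [LG h] \<and> g = h \<and> h \<in> Gprime) \<or>
    (\<exists>h' a w'. hill d h' g w' \<and> w = LG h # LA a # w' \<and> h \<in> Gprime \<and> anchored h a h' \<and>
       int (height h') = int (height h) + d)"
proof
  assume "hill d h g w"
  then obtain gs as where L: "length gs = Suc (length as)" and W: "w = mkword gs as"
    and H: "hd gs = h" and G: "last gs = g" and S: "set gs \<subseteq> Gprime"
    and A: "\<forall>i<length as. anchored (gs ! i) (as ! i) (gs ! Suc i) \<and>
         int (height (gs ! Suc i)) = int (height (gs ! i)) + d"
    unfolding hill_def by blast
  show "(w = [LG h] \<and> g = h \<and> h \<in> Gprime) \<or>
    (\<exists>h' a w'. hill d h' g w' \<and> w = LG h # LA a # w' \<and> h \<in> Gprime \<and> anchored h a h' \<and>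
       int (height h') = int (height h) + d)"
  proof (cases as)
    case Nil
    then obtain x where "gs = [x]" using L by (cases gs) auto
    then show ?thesis using W H G S Nil by (simp add: mkword_single)
  next
    case (Cons a as')
    then obtain gs' where gs: "gs = h # gs'" and L': "length gs' = Suc (length as')"
      using L H by (cases gs) auto
    have ne: "gs' \<noteq> []" using L' by auto
    have "hill d (hd gs') g (mkword gs' as')"
      unfolding hill_def
    proof (intro exI[of _ gs'] exI[of _ as'] conjI)
      show "length gs' = Suc (length as')" by (fact L')
      show "last gs' = g" using G gs ne by simp
      show "set gs' \<subseteq> Gprime" using S gs by auto
      show "\<forall>i<length as'. anchored (gs' ! i) (as' ! i) (gs' ! Suc i) \<and>
         int (height (gs' ! Suc i)) = int (height (gs' ! i)) + d"
        using A gs Cons by auto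
    qed simp_all
    moreover have "anchored h a (hd gs') \<and> int (height (hd gs')) = int (height h) + d"
      using A[rule_format, of 0] gs Cons ne by (simp add: hd_conv_nth)
    moreover have "h \<in> Gprime" using S gs by auto
    moreover have "w = LG h # LA a # mkword gs' as'" using W gs Cons ne by (simp add: mkword_cons)
    ultimately show ?thesis by blast
  qed
next
  assume "(w = [LG h] \<and> g = h \<and> h \<in> Gprime) \<or>
    (\<exists>h' a w'. hill d h' g w' \<and> w = LG h # LA a # w' \<and> h \<in> Gprime \<and> anchored h a h' \<and>
       int (height h') = int (height h) + d)"
  then show "hill d h g w"
  proof
    assume "w = [LG h] \<and> g = h \<and> h \<in> Gprime"
    then show ?thesis unfolding hill_def
      by (intro exI[of _ "[h]"] exI[of _ "[]"]) (simp add: mkword_single)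
  next
    assume "\<exists>h' a w'. hill d h' g w' \<and> w = LG h # LA a # w' \<and> h \<in> Gprime \<and> anchored h a h' \<and>
       int (height h') = int (height h) + d"
    then obtain h' a w' where hw: "hill d h' g w'" and w: "w = LG h # LA a # w'" and hp: "h \<in> Gprime"
      and an: "anchored h a h'" and ht: "int (height h') = int (height h) + d" by blast
    from hw obtain gs as where L: "length gs = Suc (length as)" and W: "w' = mkword gs as"
      and H: "hd gs = h'" and G: "last gs = g" and S: "set gs \<subseteq> Gprime"
      and A: "\<forall>i<length as. anchored (gs ! i) (as ! i) (gs ! Suc i) \<and>
         int (height (gs ! Suc i)) = int (height (gs ! i)) + d"
      unfolding hill_def by blast
    have ne: "gs \<noteq> []" using L by auto
    show ?thesis unfolding hill_def
    proof (intro exI[of _ "h # gs"] exI[of _ "a # as"] conjI)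
      show "w = mkword (h # gs) (a # as)" using w W ne by (simp add: mkword_cons)
      show "set (h # gs) \<subseteq> Gprime" using S hp by auto
      show "last (h # gs) = g" using G ne by simp
      show "\<forall>i<length (a # as). anchored ((h # gs) ! i) ((a # as) ! i) ((h # gs) ! Suc i) \<and>
         int (height ((h # gs) ! Suc i)) = int (height ((h # gs) ! i)) + d"
      proof (intro allI impI)
      fix i assume i: "i < length (a # as)"
      show "anchored ((h # gs) ! i) ((a # as) ! i) ((h # gs) ! Suc i) \<and>
         int (height ((h # gs) ! Suc i)) = int (height ((h # gs) ! i)) + d"
      proof (cases i)
        case 0 then show ?thesis using an ht H ne by (simp add: hd_conv_nth)
      next
        case (Suc j) then show ?thesis using A i by simp
      qed
      qed
    qed (use L in simp_all)
  qed
qed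

lemma hill_snoc:
  "hill d h g w \<longleftrightarrow> (w = [LG h] \<and> g = h \<and> h \<in> Gprime) \<or>
    (\<exists>g' a w'. hill d h g' w' \<and> w = w' @ [LA a, LG g] \<and> g \<in> Gprime \<and> anchored g' a g \<and>
       int (height g) = int (height g') + d)"
proof
  assume "hill d h g w"
  then obtain gs as where L: "length gs = Suc (length as)" and W: "w = mkword gs as"
    and H: "hd gs = h" and G: "last gs = g" and S: "set gs \<subseteq> Gprime"
    and A: "\<forall>i<length as. anchored (gs ! i) (as ! i) (gs ! Suc i) \<and>
         int (height (gs ! Suc i)) = int (height (gs ! i)) + d"
    unfolding hill_def by blast
  show "(w = [LG h] \<and> g = h \<and> h \<in> Gprime) \<or>
    (\<exists>g' a w'. hill d h g' w' \<and> w = w' @ [LA a, LG g] \<and> g \<in> Gprime \<and> anchored g' a g \<and>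
       int (height g) = int (height g') + d)"
  proof (cases as rule: rev_exhaust)
    case Nil
    then obtain x where "gs = [x]" using L by (cases gs) auto
    then show ?thesis using W H G S Nil by (simp add: mkword_single)
  next
    case (snoc as' a)
    then obtain gs' where gs: "gs = gs' @ [g]" and L': "length gs' = Suc (length as')"
      using L G by (cases gs rule: rev_exhaust) auto
    have ne: "gs' \<noteq> []" using L' by auto
    have "hill d h (last gs') (mkword gs' as')"
      unfolding hill_def
    proof (intro exI[of _ gs'] exI[of _ as'] conjI)
      show "length gs' = Suc (length as')" by (fact L')
      show "hd gs' = h" using H gs ne by simp
      show "set gs' \<subseteq> Gprime" using S gs by auto
      show "\<forall>i<length as'. anchored (gs' ! i) (as' ! i) (gs' ! Suc i) \<and>
         int (height (gs' ! Suc i)) = int (height (gs' ! i)) + d"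
      proof (intro allI impI)
        fix i assume i: "i < length as'"
        then show "anchored (gs' ! i) (as' ! i) (gs' ! Suc i) \<and>
         int (height (gs' ! Suc i)) = int (height (gs' ! i)) + d"
          using A[rule_format, of i] gs snoc L' by (simp add: nth_append)
      qed
    qed simp_all
    moreover have "anchored (last gs') a g \<and> int (height g) = int (height (last gs')) + d"
      using A[rule_format, of "length as'"] gs snoc L' ne by (simp add: nth_append last_conv_nth)
    moreover have "g \<in> Gprime" using S gs by auto
    moreover have "w = mkword gs' as' @ [LA a, LG g]" using W gs snoc L' by (simp add: mkword_snoc)
    ultimately show ?thesis by blast
  qed
next
  assume "(w = [LG h] \<and> g = h \<and> h \<in> Gprime) \<or>
    (\<exists>g' a w'. hill d h g' w' \<and> w = w' @ [LA a, LG g] \<and> g \<in> Gprime \<and> anchored g' a g \<and>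
       int (height g) = int (height g') + d)"
  then show "hill d h g w"
  proof
    assume "w = [LG h] \<and> g = h \<and> h \<in> Gprime"
    then show ?thesis unfolding hill_def
      by (intro exI[of _ "[h]"] exI[of _ "[]"]) (simp add: mkword_single)
  next
    assume "\<exists>g' a w'. hill d h g' w' \<and> w = w' @ [LA a, LG g] \<and> g \<in> Gprime \<and> anchored g' a g \<and>
       int (height g) = int (height g') + d"
    then obtain g' a w' where hw: "hill d h g' w'" and w: "w = w' @ [LA a, LG g]" and gp: "g \<in> Gprime"
      and an: "anchored g' a g" and ht: "int (height g) = int (height g') + d" by blast
    from hw obtain gs as where L: "length gs = Suc (length as)" and W: "w' = mkword gs as"
      and H: "hd gs = h" and G: "last gs = g'" and S: "set gs \<subseteq> Gprime"
      and A: "\<forall>i<length as. anchored (gs ! i) (as ! i) (gs ! Suc i) \<and>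
         int (height (gs ! Suc i)) = int (height (gs ! i)) + d"
      unfolding hill_def by blast
    have ne: "gs \<noteq> []" using L by auto
    show ?thesis unfolding hill_def
    proof (intro exI[of _ "gs @ [g]"] exI[of _ "as @ [a]"] conjI)
      show "w = mkword (gs @ [g]) (as @ [a])" using w W L by (simp add: mkword_snoc)
      show "set (gs @ [g]) \<subseteq> Gprime" using S gp by auto
      show "hd (gs @ [g]) = h" using H ne by simp
      show "\<forall>i<length (as @ [a]). anchored ((gs @ [g]) ! i) ((as @ [a]) ! i) ((gs @ [g]) ! Suc i) \<and>
         int (height ((gs @ [g]) ! Suc i)) = int (height ((gs @ [g]) ! i)) + d"
      proof (intro allI impI)
        fix i assume i: "i < length (as @ [a])"
        show "anchored ((gs @ [g]) ! i) ((as @ [a]) ! i) ((gs @ [g]) ! Suc i) \<and>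
         int (height ((gs @ [g]) ! Suc i)) = int (height ((gs @ [g]) ! i)) + d"
        proof (cases "i < length as")
          case True then show ?thesis using A L by (simp add: nth_append)
        next
          case False
          then have "i = length as" using i by simp
          then show ?thesis using an ht G L ne by (simp add: nth_append last_conv_nth)
        qed
      qed
    qed (use L in simp_all)
  qed
qed

lemma hill_ends: "hill d h g w \<Longrightarrow> w \<noteq> [] \<and> hd w = LG h \<and> last w = LG g \<and> h \<in> Gprime \<and> g \<in> Gprime"
proof -
  assume hw: "hill d h g w"
  then obtain gs as where L: "length gs = Suc (length as)" and W: "w = mkword gs as"
    and H: "hd gs = h" and G: "last gs = g" and S: "set gs \<subseteq> Gprime"
    unfolding hill_def by blast
  have "h \<in> Gprime" "g \<in> Gprime" using H G S L
    by (metis hd_in_set last_in_set length_0_conv nat.distinct(1) subsetD)+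
  moreover have "last w = LG g" using hw by (subst (asm) hill_snoc) auto
  ultimately show ?thesis using W H by (simp add: mkword_def)
qed

lemma UNIV_side: "(UNIV :: side set) = {SL, SR}"
  by (metis UNIV_eq_I insertCI side.exhaust)

lemma UN_side: "(\<Union>s. F s) = F SL \<union> F SR"
  by (simp add: UNIV_side)

lemma GOne_not_Suc: "(GOne::'x gen) \<notin> Gs (Suc n)"
proof
  assume "(GOne::'x gen) \<in> Gs (Suc n)"
  then have "ldepth (GOne::'x gen) = Suc n" by (rule Gs_depth)
  then show False by simp
qed

lemma Gprime_height: "g \<in> Gprime \<Longrightarrow> g \<in> Gs (height g)"
proof -
  assume "g \<in> Gprime"
  then obtain i where i: "g \<in> Gs i" using Gprime_iff by blast
  then show ?thesis using height_Gs[OF i] by simp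
qed

lemma GOne_facts: "(GOne::'x gen) \<in> Gprime" "height (GOne::'x gen) = 0"
  by (simp_all add: Gprime_def height_Gs)

lemma base_up: "{w. hill 1 (GOne::'x gen) GOne w} = {[LG GOne]}"
proof (intro set_eqI)
  fix w :: "'x letter list"
  have "\<not> (\<exists>g' a w'. hill 1 GOne g' w' \<and> w = w' @ [LA a, LG GOne] \<and> (GOne::'x gen) \<in> Gprime \<and> anchored g' a GOne \<and>
       int (height (GOne::'x gen)) = int (height g') + 1)" by (simp add: GOne_facts)
  then show "w \<in> {w. hill 1 GOne GOne w} \<longleftrightarrow> w \<in> {[LG GOne]}"
    using hill_snoc[of 1 GOne GOne w] GOne_facts by blast
qed

lemma base_down: "{w. hill (-1) (GOne::'x gen) GOne w} = {[LG GOne]}"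
proof (intro set_eqI)
  fix w :: "'x letter list"
  have "\<not> (\<exists>h' a w'. hill (-1) h' GOne w' \<and> w = LG GOne # LA a # w' \<and> (GOne::'x gen) \<in> Gprime \<and> anchored GOne a h' \<and>
       int (height h') = int (height (GOne::'x gen)) + -1)" by (simp add: GOne_facts)
  then show "w \<in> {w. hill (-1) GOne GOne w} \<longleftrightarrow> w \<in> {[LG GOne]}"
    using hill_cons[of "-1" GOne GOne w] GOne_facts by blast
qed

lemma up_step:
  assumes g: "g \<in> Gs (Suc n)"
  shows "{w. hill 1 GOne g w} = (\<Union>s. (\<lambda>w. w @ [LA (anch g s), LG g]) ` {w. hill 1 GOne (entry g s) w})"
proof (intro equalityI subsetI)
  fix w assume "w \<in> {w. hill 1 GOne g w}"
  then have "hill 1 GOne g w" by simp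
  moreover have "g \<noteq> GOne" using g GOne_not_Suc by metis
  ultimately obtain g' a w' where hw: "hill 1 GOne g' w'" and w: "w = w' @ [LA a, LG g]"
     and an: "anchored g' a g" and ht: "int (height g) = int (height g') + 1"
    by (subst (asm) hill_snoc) auto
  have hg: "height g = Suc n" using g height_Gs by blast
  have "g' \<in> Gprime" using hill_ends[OF hw] by simp
  then have g'': "g' \<in> Gs (height g')" by (rule Gprime_height)
  have hg': "height g' = n" using hg ht by simp
  have "\<exists>s. g' = entry g s \<and> a = anch g s"
  proof -
    { assume "right_anchored g' a g"
      then obtain s where "g' \<in> G5" "g = entry g' s" unfolding right_anchored_def by auto
      then obtain j where "j \<ge> 1" "g' \<in> Gs j" "g = entry g' s" unfolding G5_iff by auto
      moreover then have "j = n" using g'' hg' Gs_depth by metis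
      ultimately have "g \<in> Gs (n - 1)" using Gs_entry[of g' "n - 1" s] by simp
      then have False using hg height_Gs by fastforce }
    then show ?thesis using an unfolding anchored_def left_anchored_def by auto
  qed
  then obtain s where "g' = entry g s" "a = anch g s" by blast
  then show "w \<in> (\<Union>s. (\<lambda>w. w @ [LA (anch g s), LG g]) ` {w. hill 1 GOne (entry g s) w})"
    using hw w by blast
next
  fix w assume "w \<in> (\<Union>s. (\<lambda>w. w @ [LA (anch g s), LG g]) ` {w. hill 1 GOne (entry g s) w})"
  then obtain s w' where hw: "hill 1 GOne (entry g s) w'" and w: "w = w' @ [LA (anch g s), LG g]" by blast
  have e: "entry g s \<in> Gs n" using Gs_entry[OF g] .
  have "g \<in> G5" using g unfolding G5_iff by (intro exI[of _ "Suc n"]) simp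
  then have an: "anchored (entry g s) (anch g s) g" unfolding anchored_def left_anchored_def by blast
  have "g \<in> Gprime" using g Gprime_iff by blast
  moreover have "int (height g) = int (height (entry g s)) + 1"
    using height_Gs[OF g] height_Gs[OF e] by simp
  ultimately have "hill 1 GOne g w" using hw w an by (subst hill_snoc) blast
  then show "w \<in> {w. hill 1 GOne g w}" by simp
qed

lemma down_step:
  assumes g: "g \<in> Gs (Suc n)"
  shows "{w. hill (-1) g GOne w} = (\<Union>s. (\<lambda>w. LG g # LA (ainv (anch g s)) # w) ` {w. hill (-1) (entry g s) GOne w})"
proof (intro equalityI subsetI)
  fix w assume "w \<in> {w. hill (-1) g GOne w}"
  then have "hill (-1) g GOne w" by simp
  moreover have "g \<noteq> GOne" using g GOne_not_Suc by metis
  ultimately obtain h' a w' where hw: "hill (-1) h' GOne w'" and w: "w = LG g # LA a # w'"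
     and an: "anchored g a h'" and ht: "int (height h') = int (height g) + -1"
    by (subst (asm) hill_cons) auto
  have hg: "height g = Suc n" using g height_Gs by blast
  have "h' \<in> Gprime" using hill_ends[OF hw] by simp
  then have g'': "h' \<in> Gs (height h')" by (rule Gprime_height)
  have hg': "height h' = n" using hg ht by simp
  have "\<exists>s. h' = entry g s \<and> a = ainv (anch g s)"
  proof -
    { assume "left_anchored g a h'"
      then obtain s where "h' \<in> G5" "g = entry h' s" unfolding left_anchored_def by auto
      then obtain j where "j \<ge> 1" "h' \<in> Gs j" "g = entry h' s" unfolding G5_iff by auto
      moreover then have "j = n" using g'' hg' Gs_depth by metis
      ultimately have "g \<in> Gs (n - 1)" using Gs_entry[of h' "n - 1" s] by simp
      then have False using hg height_Gs by fastforce }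
    then show ?thesis using an unfolding anchored_def right_anchored_def by auto
  qed
  then obtain s where "h' = entry g s" "a = ainv (anch g s)" by blast
  then show "w \<in> (\<Union>s. (\<lambda>w. LG g # LA (ainv (anch g s)) # w) ` {w. hill (-1) (entry g s) GOne w})"
    using hw w by blast
next
  fix w assume "w \<in> (\<Union>s. (\<lambda>w. LG g # LA (ainv (anch g s)) # w) ` {w. hill (-1) (entry g s) GOne w})"
  then obtain s w' where hw: "hill (-1) (entry g s) GOne w'" and w: "w = LG g # LA (ainv (anch g s)) # w'" by blast
  have e: "entry g s \<in> Gs n" using Gs_entry[OF g] .
  have "g \<in> G5" using g unfolding G5_iff by (intro exI[of _ "Suc n"]) simp
  then have an: "anchored g (ainv (anch g s)) (entry g s)" unfolding anchored_def right_anchored_def by blast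
  have "g \<in> Gprime" using g Gprime_iff by blast
  moreover have "int (height (entry g s)) = int (height g) + -1"
    using height_Gs[OF g] height_Gs[OF e] by simp
  ultimately have "hill (-1) g GOne w" using hw w an by (subst hill_cons) blast
  then show "w \<in> {w. hill (-1) g GOne w}" by simp
qed


lemma up_count: "g \<in> Gs n \<Longrightarrow> finite {w. hill 1 GOne g w} \<and> card {w. hill 1 GOne g w} = 2^n \<and>
   (\<forall>w. hill 1 GOne g w \<longrightarrow> length w = 2*n+1)"
proof (induct n arbitrary: g)
  case 0
  then have "g = GOne" by simp
  then have e: "{w. hill 1 GOne g w} = {[LG GOne]}" by (simp add: base_up)
  have l: "length w = 1" if "hill 1 GOne g w" for w
  proof -
    have "w \<in> {[LG GOne]}" using that e by blast
    then show ?thesis by simp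
  qed
  show ?case unfolding e using l by simp
next
  case (Suc n)
  define F where "F s = (\<lambda>w. w @ [LA (anch g s), LG g]) ` {w. hill 1 GOne (entry g s) w}" for s
  have IH: "finite {w. hill 1 GOne (entry g s) w} \<and> card {w. hill 1 GOne (entry g s) w} = 2^n \<and>
   (\<forall>w. hill 1 GOne (entry g s) w \<longrightarrow> length w = 2*n+1)" for s
    using Suc(1)[OF Gs_entry[OF Suc(2)]] .
  have eq: "{w. hill 1 GOne g w} = F SL \<union> F SR"
    unfolding up_step[OF Suc(2)] UN_side F_def ..
  have fin: "finite (F s)" for s using IH unfolding F_def by simp
  have cardF: "card (F s) = 2^n" for s
  proof -
    have "inj_on (\<lambda>w. w @ [LA (anch g s), LG g]) {w. hill 1 GOne (entry g s) w}"
      by (auto simp: inj_on_def)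
    then show ?thesis unfolding F_def using IH by (simp add: card_image)
  qed
  have disj: "F SL \<inter> F SR = {}"
  proof (rule ccontr)
    assume "F SL \<inter> F SR \<noteq> {}"
    then obtain w1 w2 where h1: "hill 1 GOne (entry g SL) w1" and h2: "hill 1 GOne (entry g SR) w2"
      and e: "w1 @ [LA (anch g SL), LG g] = w2 @ [LA (anch g SR), LG g]"
      unfolding F_def by blast
    have "length w1 = 2*n+1" using IH[of SL] h1 by blast
    moreover have "length w2 = 2*n+1" using IH[of SR] h2 by blast
    ultimately have "length w1 = length w2" by simp
    then have "w1 = w2" "anch g SL = anch g SR" using e by auto
    moreover have "last w1 = LG (entry g SL)" "last w2 = LG (entry g SR)"
      using hill_ends[OF h1] hill_ends[OF h2] by auto
    ultimately show False using Gs_distinct[OF Suc(2)] by simp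
  qed
  have len: "\<forall>w. hill 1 GOne g w \<longrightarrow> length w = 2 * Suc n + 1"
  proof (intro allI impI)
    fix w assume "hill 1 GOne g w"
    then have "w \<in> F SL \<union> F SR" using eq by blast
    then obtain s w' where h': "hill 1 GOne (entry g s) w'" and w: "w = w' @ [LA (anch g s), LG g]"
      unfolding F_def by blast
    have "length w' = 2*n+1" using IH[of s] h' by blast
    then show "length w = 2 * Suc n + 1" using w by simp
  qed
  show ?case using eq fin cardF disj len by (simp add: card_Un_disjoint)
qed

lemma down_count: "g \<in> Gs n \<Longrightarrow> finite {w. hill (-1) g GOne w} \<and> card {w. hill (-1) g GOne w} = 2^n"
proof (induct n arbitrary: g)
  case 0
  then have "g = GOne" by simp
  then have e: "{w. hill (-1) g GOne w} = {[LG GOne]}" by (simp add: base_down)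
  then show ?case unfolding e by auto
next
  case (Suc n)
  define F where "F s = (\<lambda>w. LG g # LA (ainv (anch g s)) # w) ` {w. hill (-1) (entry g s) GOne w}" for s
  have IH: "finite {w. hill (-1) (entry g s) GOne w} \<and> card {w. hill (-1) (entry g s) GOne w} = 2^n" for s
    using Suc(1)[OF Gs_entry[OF Suc(2)]] .
  have eq: "{w. hill (-1) g GOne w} = F SL \<union> F SR"
    unfolding down_step[OF Suc(2)] UN_side F_def ..
  have fin: "finite (F s)" for s using IH unfolding F_def by simp
  have cardF: "card (F s) = 2^n" for s
  proof -
    have "inj_on (\<lambda>w. LG g # LA (ainv (anch g s)) # w) {w. hill (-1) (entry g s) GOne w}"
      by (auto simp: inj_on_def)
    then show ?thesis unfolding F_def using IH by (simp add: card_image)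
  qed
  have disj: "F SL \<inter> F SR = {}"
  proof (rule ccontr)
    assume "F SL \<inter> F SR \<noteq> {}"
    then obtain w1 w2 where h1: "hill (-1) (entry g SL) GOne w1" and h2: "hill (-1) (entry g SR) GOne w2"
      and e: "LG g # LA (ainv (anch g SL)) # w1 = LG g # LA (ainv (anch g SR)) # w2"
      unfolding F_def by blast
    then have "w1 = w2" "anch g SL = anch g SR" by auto
    moreover have "hd w1 = LG (entry g SL)" "hd w2 = LG (entry g SR)"
      using hill_ends[OF h1] hill_ends[OF h2] by auto
    ultimately show False using Gs_distinct[OF Suc(2)] by simp
  qed
  show ?case using eq fin cardF disj by (simp add: card_Un_disjoint)
qed

theorem lemma4p3:
  fixes n :: nat and g :: "'x gen"
  assumes "n \<ge> 1" and "g \<in> Gs n"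
  shows "card {w. uphill GOne g w} = 2 ^ n \<and>
         card {w. downhill g GOne w} = 2 ^ n \<and>
         card {w. mountain g w} = 2 ^ (2 * n)"
proof -
  define U where "U = {w. hill 1 GOne g w}"
  define D where "D = {w. hill (-1) g GOne w}"
  have U: "finite U" "card U = 2^n" "\<And>w. w \<in> U \<Longrightarrow> length w = 2*n+1"
    using up_count[OF assms(2)] unfolding U_def by auto
  have D: "finite D" "card D = 2^n"
    using down_count[OF assms(2)] unfolding D_def by auto
  have g5: "g \<in> G5" using assms unfolding G5_iff by blast
  have M: "{w. mountain g w} = (\<lambda>(u, v). u @ tl v) ` (U \<times> D)"
    unfolding mountain_def U_def D_def uphill_def downhill_def using g5 by auto
  have inj: "inj_on (\<lambda>(u, v). u @ tl v) (U \<times> D)"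
  proof (rule inj_onI)
    fix x y assume x: "x \<in> U \<times> D" and y: "y \<in> U \<times> D" and e: "(case x of (u, v) \<Rightarrow> u @ tl v) = (case y of (u, v) \<Rightarrow> u @ tl v)"
    obtain u1 v1 u2 v2 where xy: "x = (u1, v1)" "y = (u2, v2)" by fastforce
    have "length u1 = length u2" using U(3) x y xy by auto
    then have uu: "u1 = u2" and tt: "tl v1 = tl v2" using e xy by auto
    have "v1 \<noteq> [] \<and> hd v1 = LG g" "v2 \<noteq> [] \<and> hd v2 = LG g"
      using x y xy hill_ends unfolding D_def by auto
    then have "v1 = v2" using tt by (metis list.collapse)
    then show "x = y" using uu xy by simp
  qed
  have "card {w. mountain g w} = card U * card D"
    unfolding M using card_image[OF inj] by (simp add: card_cartesian_product)
  then have "card {w. mountain g w} = 2 ^ (2 * n)" using U D by (simp add: power_add mult_2)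
  then show ?thesis using U D unfolding U_def D_def uphill_def downhill_def by simp
qed

end
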